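(* Let $q\in(0,\tfrac12)$ and let $T\sim U(1,2)$, $S\sim U(-1,0)$ be independent. Let $p_3^{PD}$ be the probability that $$P_{T,S}(x)=(T+S-1)x^3+\big(1-T-2S+q(S-1-T)\big)x^2+\big(S+q(T-S)\big)x$$ has exactly three distinct roots in $[0,1]$. Then $$p_3^{PD}\leq \frac{q}{2(1-q)}.$$ In particular $p_3^{PD}\le \tfrac12$ for all $q\in(0,\tfrac12)$ and $p_3^{PD}\to 0$ as $q\to 0^+$. *)

theory Defs
  imports "HOL-Probability.Probability"
begin

definition P_TS :: "real \<Rightarrow> real \<Rightarrow> real \<Rightarrow> real \<Rightarrow> real" where
  "P_TS qq tt ss x = (tt + ss - 1) * x ^ 3 + (1 - tt - 2 * ss + qq * (ss - 1 - tt)) * x ^ 2 + (ss + qq * (tt - ss)) * x"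

definition TS_law :: "(real \<times> real) measure" where
  "TS_law = uniform_measure lborel {1..2::real} \<Otimes>\<^sub>M uniform_measure lborel {-1..0::real}"

definition p3PD :: "real \<Rightarrow> real" where
  "p3PD q = measure TS_law {(t, s). card {x \<in> {0..1}. P_TS q t s x = 0} = 3}"

end

theory Submission
  imports Defs
begin

lemma key_incl:
  fixes q t s :: real
  assumes q: "0 < q" and c3: "card {x \<in> {0..1}. P_TS q t s x = 0} = 3"
  shows "q * s < (1 - t) * (1 - q)"
proof -
  define R where "R = {x \<in> {0..1::real}. P_TS q t s x = 0}"
  have fin: "finite R" using c3 R_def by (metis card.infinite zero_neq_numeral)
  have "0 \<in> R" unfolding R_def P_TS_def by simp
  then have "card (R - {0}) = 2" using c3 fin R_def by (simp add: card_Diff_singleton)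
  then obtain x1 x2 where x12: "R - {0} = {x1, x2}" "x1 \<noteq> x2" by (auto simp: card_2_iff)
  define m where "m = 1 - t - s"
  define c where "c = -(s + q*(t - s))"
  have Q: "0 < x \<and> x < 1 \<and> - m * x^2 + (m + c - q) * x - c = 0" if "x \<in> R - {0}" for x
  proof -
    have x: "0 \<le> x" "x \<le> 1" "x \<noteq> 0" "P_TS q t s x = 0" using that R_def by auto
    have "P_TS q t s x = x * (- m * x^2 + (m + c - q) * x - c)"
      unfolding P_TS_def m_def c_def by (simp add: algebra_simps power2_eq_square power3_eq_cube)
    then have E: "- m * x^2 + (m + c - q) * x - c = 0" using x by simp
    have "x \<noteq> 1" proof
      assume "x = 1" then show False using E q unfolding m_def c_def by (simp add: algebra_simps)
    qed
    then show ?thesis using x E by auto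
  qed
  have A: "0 < x1" "x1 < 1" "- m * x1^2 + (m + c - q) * x1 - c = 0" using Q x12 by auto
  have B: "0 < x2" "x2 < 1" "- m * x2^2 + (m + c - q) * x2 - c = 0" using Q x12 by auto
  have "(x1 - x2) * (- m * (x1 + x2) + m + c - q) = 0"
    using A(3) B(3) by (simp add: algebra_simps power2_eq_square)
  then have s1: "m * (x1 + x2) = m + c - q" using x12(2) by simp
  have cc: "c = m * x1 * x2"
  proof -
    have "- m * x1^2 + m * (x1 + x2) * x1 - c = 0" using A(3) s1 by simp
    then show ?thesis by (simp add: algebra_simps power2_eq_square)
  qed
  have qq: "q = m * ((1 - x1) * (1 - x2))" using s1 cc by (simp add: algebra_simps)
  have pos: "(1 - x1) * (1 - x2) > 0" using A B by simp
  have mpos: "m > 0" using qq pos q by (metis zero_less_mult_pos2)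
  have "x1 + x2 - 2 * x1 * x2 > 0"
  proof -
    have "x1 * (1 - x2) > 0" "x2 * (1 - x1) > 0" using A B by simp_all
    then show ?thesis by (simp add: algebra_simps)
  qed
  then have "m * (x1 + x2 - 2 * x1 * x2) > 0" using mpos by simp
  moreover have "(1 - t) * (1 - q) - q * s = m * (x1 + x2 - 2 * x1 * x2)"
    using qq cc unfolding m_def c_def by (simp add: algebra_simps)
  ultimately show ?thesis by linarith
qed


lemma ftc_part:
  fixes L :: real assumes L: "0 < L"
  shows "((\<lambda>t. 1 - (t - 1) / L) has_integral L / 2) {1..1+L}"
proof -
  define F where "F t = t - (t - 1)^2 / (2 * L)" for t :: real
  have "((\<lambda>t. 1 - (t - 1) / L) has_integral (F (1+L) - F 1)) {1..1+L}"
  proof (rule fundamental_theorem_of_calculus)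
    show "1 \<le> 1 + L" using L by simp
    fix x :: real assume "x \<in> {1..1+L}"
    have "(F has_real_derivative (1 - (x - 1) / L)) (at x)"
      unfolding F_def using L
      by (auto intro!: derivative_eq_intros simp: field_simps)
    then show "(F has_vector_derivative (1 - (x - 1) / L)) (at x within {1..1+L})"
      by (simp add: has_real_derivative_iff_has_vector_derivative has_vector_derivative_at_within)
  qed
  moreover have "F (1+L) - F 1 = L / 2" unfolding F_def using L
    by (simp add: field_simps power2_eq_square)
  ultimately show ?thesis by simp
qed

lemma meas_bound:
  fixes q :: real
  assumes q: "0 < q" "q < 1/2"
  shows "emeasure TS_law {p. q * snd p < (1 - fst p) * (1 - q)} \<le> ennreal (q / (2 * (1 - q)))"
proof -
  define U1 where "U1 = uniform_measure lborel {1..2::real}"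
  define U2 where "U2 = uniform_measure lborel {-1..0::real}"
  define B where "B = {p::real\<times>real. q * snd p < (1 - fst p) * (1 - q)}"
  define L where "L = q / (1 - q)"
  have L: "0 < L" "L \<le> 1" using q unfolding L_def by (auto simp: field_simps)
  have ps2: "prob_space U2" unfolding U2_def by (rule prob_space_uniform_measure) auto
  then interpret U2: prob_space U2 .
  have sU1: "sets U1 = sets borel" and sU2: "sets U2 = sets borel" unfolding U1_def U2_def by auto
  have Bm: "B \<in> sets (U1 \<Otimes>\<^sub>M U2)"
  proof -
    have "{p \<in> space (borel \<Otimes>\<^sub>M borel). q * snd p < (1 - fst p) * (1 - (q::real))} \<in> sets (borel \<Otimes>\<^sub>M borel)"
      by measurable
    then have "B \<in> sets (borel \<Otimes>\<^sub>M borel)" unfolding B_def by (simp add: space_pair_measure)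
    then show ?thesis using sets_pair_measure_cong[OF sU1 sU2] by simp
  qed
  have "emeasure TS_law B = (\<integral>\<^sup>+t. emeasure U2 (Pair t -` B) \<partial>U1)"
    unfolding TS_law_def U1_def[symmetric] U2_def[symmetric]
    by (rule U2.emeasure_pair_measure_alt[OF Bm])
  also have "\<dots> \<le> (\<integral>\<^sup>+t. ennreal (1 - (t - 1) / L) \<partial>U1)"
  proof (rule nn_integral_mono)
    fix t :: real
    define k where "k = (1 - t) * (1 - q) / q"
    have sl: "Pair t -` B = {..<k}" unfolding B_def k_def using q
      by (auto simp: field_simps)
    have "emeasure U2 (Pair t -` B) = emeasure lborel ({-1..0} \<inter> {..<k})"
      unfolding sl U2_def by (subst emeasure_uniform_measure) (auto simp: divide_ennreal_def)
    also have "\<dots> \<le> emeasure lborel {-1..k}" by (rule emeasure_mono) auto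
    also have "\<dots> \<le> ennreal (k + 1)" by (simp add: emeasure_lborel_Icc_eq)
    also have "k + 1 = 1 - (t - 1) / L" unfolding k_def L_def using q by (simp add: field_simps)
    finally show "emeasure U2 (Pair t -` B) \<le> ennreal (1 - (t - 1) / L)" .
  qed
  also have "\<dots> = (\<integral>\<^sup>+t. ennreal (1 - (t - 1) / L) * indicator {1..2} t \<partial>lborel) / emeasure lborel {1..2::real}"
    unfolding U1_def by (rule nn_integral_uniform_measure) auto
  also have "\<dots> = (\<integral>\<^sup>+t. ennreal (1 - (t - 1) / L) * indicator {1..1+L} t \<partial>lborel)"
  proof -
    have "\<And>t. ennreal (1 - (t - 1) / L) * indicator {1..2} t = ennreal (1 - (t - 1) / L) * indicator {1..1+L} t"
    proof -
      fix t :: real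
      show "ennreal (1 - (t - 1) / L) * indicator {1..2} t = ennreal (1 - (t - 1) / L) * indicator {1..1+L} t"
      proof (cases "t \<le> 1 + L")
        case True then show ?thesis using L by (auto simp: indicator_def)
      next
        case False
        then have "1 - (t - 1) / L \<le> 0" using L by (simp add: field_simps)
        then have "ennreal (1 - (t - 1) / L) = 0" by (simp add: ennreal_eq_0_iff)
        then show ?thesis by simp
      qed
    qed
    then show ?thesis by (simp add: divide_ennreal_def)
  qed
  also have "\<dots> = ennreal (L / 2)"
  proof (rule nn_integral_has_integral_lebesgue'[OF _ ftc_part[OF L(1)]])
    fix x assume "x \<in> {1..1+L}" then show "0 \<le> 1 - (x - 1) / L" using L by (simp add: field_simps)
  qed
  also have "L / 2 = q / (2 * (1 - q))" unfolding L_def by simp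
  finally show ?thesis unfolding B_def .
qed

lemma bound:
  fixes q :: real
  assumes q: "0 < q" "q < 1/2"
  shows "p3PD q \<le> q / (2 * (1 - q))"
proof -
  define B where "B = {p::real\<times>real. q * snd p < (1 - fst p) * (1 - q)}"
  have "{p \<in> space (borel \<Otimes>\<^sub>M borel). q * snd p < (1 - fst p) * (1 - (q::real))} \<in> sets (borel \<Otimes>\<^sub>M borel)"
    by measurable
  then have "B \<in> sets (borel \<Otimes>\<^sub>M borel)" unfolding B_def by (simp add: space_pair_measure)
  moreover have "sets TS_law = sets (borel \<Otimes>\<^sub>M borel)" unfolding TS_law_def
    by (rule sets_pair_measure_cong) auto
  ultimately have Bm: "B \<in> sets TS_law" by simp
  have sub: "{(t, s). card {x \<in> {0..1}. P_TS q t s x = 0} = 3} \<subseteq> B"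
    unfolding B_def using key_incl q by auto
  have "emeasure TS_law {(t, s). card {x \<in> {0..1}. P_TS q t s x = 0} = 3} \<le> emeasure TS_law B"
    by (rule emeasure_mono[OF sub Bm])
  also have "\<dots> \<le> ennreal (q / (2 * (1 - q)))" unfolding B_def by (rule meas_bound[OF q])
  finally show ?thesis unfolding p3PD_def measure_def
    by (rule enn2real_leI[rotated]) (use q in simp)
qed

theorem lemma2p5:
  shows "(\<forall>q::real. 0 < q \<and> q < 1/2 \<longrightarrow> p3PD q \<le> q / (2 * (1 - q)) \<and> p3PD q \<le> 1/2)
         \<and> (p3PD \<longlongrightarrow> 0) (at_right 0)"
proof
  show A: "\<forall>q::real. 0 < q \<and> q < 1/2 \<longrightarrow> p3PD q \<le> q / (2 * (1 - q)) \<and> p3PD q \<le> 1/2"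
  proof (intro allI impI conjI)
    fix q :: real assume q: "0 < q \<and> q < 1/2"
    then show b: "p3PD q \<le> q / (2 * (1 - q))" using bound by auto
    have "q / (2 * (1 - q)) \<le> 1/2" using q by (simp add: field_simps)
    then show "p3PD q \<le> 1/2" using b by linarith
  qed
  show "(p3PD \<longlongrightarrow> 0) (at_right 0)"
  proof (rule tendsto_sandwich[where f = "\<lambda>_. 0" and h = "\<lambda>q. q / (2 * (1 - q))"])
    show "\<forall>\<^sub>F q in at_right 0. 0 \<le> p3PD q" by (simp add: p3PD_def)
    have "\<forall>\<^sub>F q in at_right (0::real). q < 1/2"
      unfolding eventually_at_right_field by (rule exI[of _ "1/2"]) auto
    moreover have "\<forall>\<^sub>F q in at_right (0::real). 0 < q" by (simp add: eventually_at_right_less)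
    ultimately show "\<forall>\<^sub>F q in at_right 0. p3PD q \<le> q / (2 * (1 - q))"
      by eventually_elim (use bound in auto)
    show "((\<lambda>_. 0) \<longlongrightarrow> (0::real)) (at_right 0)" by simp
    have "((\<lambda>q::real. q / (2 * (1 - q))) \<longlongrightarrow> 0 / (2 * (1 - 0))) (at_right 0)"
      by (intro tendsto_intros) auto
    then show "((\<lambda>q::real. q / (2 * (1 - q))) \<longlongrightarrow> 0) (at_right 0)" by simp
  qed
qed

end
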